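(* Let $n$ be a positive integer and let $\mathcal M_{n^2}$ be the set of integer matrices $\begin{pmatrix}a&b\\c&d\end{pmatrix}$ with $ad-bc=n^2$ and $\gcd(a,b,c,d)=1$. A complete set of representatives of the inequivalent parabolic elements of $\mathcal M_{n^2}$ is $$\begin{pmatrix}n&a\\0&n\end{pmatrix},\qquad a=1,\dots,n,\ \gcd(a,n)=1.$$
   Context: An element of $\mathcal M_{n^2}$ is parabolic if it fixes exactly one point of $\mathbb P^1(\mathbb Q)$ and no other point of $\mathbb P^1(\mathbb C)$ (a single cusp). Two parabolic elements $\gamma_1,\gamma_2$ are equivalent if there exist $\sigma\in\mathrm{SL}(2,\mathbb Z)$ and $\alpha$ in the stabilizer in $\mathrm{SL}(2,\mathbb Z)$ of the cusp fixed by $\gamma_2$ such that $\sigma\gamma_1\sigma^{-1}=\alpha\gamma_2$. *)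

theory Defs
  imports "HOL-Analysis.Analysis"
begin

text \<open>2x2 integer matrices are elements of int^2^2; entries A$1$1 = a, A$1$2 = b,
  A$2$1 = c, A$2$2 = d.\<close>

definition mat2 :: "int \<Rightarrow> int \<Rightarrow> int \<Rightarrow> int \<Rightarrow> int^2^2" where
  "mat2 a b c d = vector [vector [a, b], vector [c, d]]"

definition Mset :: "int \<Rightarrow> (int^2^2) set" where
  "Mset m = {A. det A = m \<and>
     gcd (gcd (A$1$1) (A$1$2)) (gcd (A$2$1) (A$2$2)) = 1}"

definition SL2Z :: "(int^2^2) set" where
  "SL2Z = {A. det A = 1}"

text \<open>A fixes the point [x:y] of P^1(C) (homogeneous coordinates, (x,y) nonzero)
  under the Moebius action z \<mapsto> (az+b)/(cz+d), i.e. A (x,y)^T is proportional to (x,y)^T.\<close>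
definition fixes_pt :: "int^2^2 \<Rightarrow> complex \<Rightarrow> complex \<Rightarrow> bool" where
  "fixes_pt A x y \<longleftrightarrow> (x, y) \<noteq> (0, 0) \<and>
     (of_int (A$1$1) * x + of_int (A$1$2) * y) * y = (of_int (A$2$1) * x + of_int (A$2$2) * y) * x"

text \<open>Parabolic: fixes exactly one point of P^1(Q) and no other point of P^1(C):
  there is a rational point [p:q] fixed by A and every fixed point [x:y] in P^1(C)
  equals [p:q].\<close>
definition parabolic :: "int^2^2 \<Rightarrow> bool" where
  "parabolic A \<longleftrightarrow> (\<exists>p q :: rat. fixes_pt A (of_rat p) (of_rat q) \<and>
     (\<forall>x y. fixes_pt A x y \<longrightarrow> x * of_rat q = y * of_rat p))"

text \<open>Equivalence: exist sigma in SL2(Z) and alpha in SL2(Z) stabilising the cusp fixed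
  by g2 (for parabolic g2, its fixed points in P^1(C) are exactly that cusp) with
  sigma g1 sigma^{-1} = alpha g2, written without inverse as sigma g1 = alpha g2 sigma.\<close>
definition parab_equiv :: "int^2^2 \<Rightarrow> int^2^2 \<Rightarrow> bool" where
  "parab_equiv g1 g2 \<longleftrightarrow> (\<exists>\<sigma> \<alpha>. \<sigma> \<in> SL2Z \<and> \<alpha> \<in> SL2Z \<and>
     (\<forall>x y. fixes_pt g2 x y \<longrightarrow> fixes_pt \<alpha> x y) \<and>
     \<sigma> ** g1 = \<alpha> ** g2 ** \<sigma>)"

end

theory Submission
  imports Defs
begin


lemma mat2_nth[simp]: "mat2 a b c d $1$1 = a" "mat2 a b c d $1$2 = b" "mat2 a b c d $2$1 = c" "mat2 a b c d $2$2 = d"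
  by (simp_all add: mat2_def)

lemma mat2_eta: "(A::int^2^2) = mat2 (A$1$1) (A$1$2) (A$2$1) (A$2$2)"
  by (simp add: vec_eq_iff forall_2)

lemma mat2_eq_iff: "mat2 a b c d = mat2 a' b' c' d' \<longleftrightarrow> a = a' \<and> b = b' \<and> c = c' \<and> d = d'"
  by (metis mat2_nth)

lemma mat2_mult: "mat2 a b c d ** mat2 e f g h = mat2 (a*e+b*g) (a*f+b*h) (c*e+d*g) (c*f+d*h)"
  by (simp add: vec_eq_iff forall_2 matrix_matrix_mult_def sum_2)

lemma mat2_det: "det (mat2 a b c d) = a*d - b*c"
  by (simp add: det_2)

lemma mat2_one: "mat2 1 0 0 1 = (mat 1 :: int^2^2)"
  by (simp add: vec_eq_iff forall_2 mat_def)

lemma part1: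
  assumes "n > 0" "1 \<le> a" "coprime a n"
  shows "mat2 (int n) (int a) 0 (int n) \<in> Mset (int n ^ 2) \<and> parabolic (mat2 (int n) (int a) 0 (int n))"
proof
  have "gcd (int n) (int a) = 1" using assms(3)
    by (metis coprime_commute coprime_int_iff coprime_iff_gcd_eq_1)
  then show "mat2 (int n) (int a) 0 (int n) \<in> Mset (int n ^ 2)"
    by (simp add: Mset_def mat2_det power2_eq_square)
  show "parabolic (mat2 (int n) (int a) 0 (int n))"
    unfolding parabolic_def
  proof (intro exI conjI allI impI)
    show "fixes_pt (mat2 (int n) (int a) 0 (int n)) (of_rat 1) (of_rat 0)"
      by (simp add: fixes_pt_def)
    fix x y assume "fixes_pt (mat2 (int n) (int a) 0 (int n)) x y"
    then have "of_int (int a) * y * y = 0" by (simp add: fixes_pt_def algebra_simps)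
    then have "y = 0" using assms(2) by simp
    then show "x * of_rat 0 = y * of_rat 1" by simp
  qed
qed

lemma part3:
  assumes "n > 0" "1 \<le> a" "a \<le> n" "1 \<le> b" "b \<le> n"
    and eq: "parab_equiv (mat2 (int n) (int a) 0 (int n)) (mat2 (int n) (int b) 0 (int n))"
  shows "a = b"
proof -
  obtain \<sigma> \<alpha> where s: "\<sigma> \<in> SL2Z" and al: "\<alpha> \<in> SL2Z"
    and fx: "\<forall>x y. fixes_pt (mat2 (int n) (int b) 0 (int n)) x y \<longrightarrow> fixes_pt \<alpha> x y"
    and e: "\<sigma> ** mat2 (int n) (int a) 0 (int n) = \<alpha> ** mat2 (int n) (int b) 0 (int n) ** \<sigma>"
    using eq unfolding parab_equiv_def by blast
  have "fixes_pt (mat2 (int n) (int b) 0 (int n)) 1 0" by (simp add: fixes_pt_def)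
  then have "fixes_pt \<alpha> 1 0" using fx by blast
  then have a21: "\<alpha>$2$1 = 0" by (simp add: fixes_pt_def)
  obtain w1 w2 w3 w4 where sd: "\<sigma> = mat2 w1 w2 w3 w4" using mat2_eta by blast
  obtain e0 k f where ad: "\<alpha> = mat2 e0 k 0 f" using mat2_eta a21 by metis
  have ds: "w1*w4 - w2*w3 = 1" using s sd by (simp add: SL2Z_def mat2_det)
  have ef: "e0*f = 1" using al ad by (simp add: SL2Z_def mat2_det)
  have E: "n*w1 = e0*n*w1 + (e0*b+k*n)*w3" "a*w1 + n*w2 = e0*n*w2 + (e0*b+k*n)*w4"
     "n*w3 = f*n*w3" "a*w3 + n*w4 = f*n*w4"
    using e by (simp_all add: sd ad mat2_mult mat2_eq_iff algebra_simps)
  have npos: "int n \<noteq> 0" using assms by simp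
  from ef consider "e0 = 1 \<and> f = 1" | "e0 = -1 \<and> f = -1" by (auto simp: zmult_eq_1_iff)
  then show ?thesis
  proof cases
    case 1
    then have "int a * w3 = 0" using E(4) by simp
    then have w3: "w3 = 0" using assms by simp
    then have "w1*w4 = 1" using ds by simp
    then have "w1 = w4" "w4 = 1 \<or> w4 = -1" by (auto simp: zmult_eq_1_iff)
    moreover have "int a * w1 = (int b + k*n)*w4" using E(2) 1 w3 by simp
    ultimately have "int a = int b + k * int n" by auto
    then have "int a mod int n = int b mod int n" by simp
    moreover have "int a mod int n = (if a = n then 0 else int a)" using assms by auto
    moreover have "int b mod int n = (if b = n then 0 else int b)" using assms by auto
    ultimately show ?thesis using assms by (auto split: if_splits)
  next
    case 2
    then have "2 * (int n * w3) = 0" using E(3) by simp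
    then have "w3 = 0" using npos by simp
    moreover have "2 * (int n * w4) = 0" using E(4) 2 \<open>w3 = 0\<close> by simp
    then have "w4 = 0" using npos by simp
    ultimately show ?thesis using ds by simp
  qed
qed

lemma rat_to_int:
  fixes p q :: rat and A B C D :: int
  assumes nz: "(p,q) \<noteq> (0,0)"
    and eq: "(of_int A * p + of_int B * q) * q = (of_int C * p + of_int D * q) * p"
  shows "\<exists>u v::int. coprime u v \<and> (A * u + B * v) * v = (C * u + D * v) * u"
proof -
  obtain a1 b1 where q1: "quotient_of p = (a1, b1)" by (cases "quotient_of p") auto
  obtain a2 b2 where q2: "quotient_of q = (a2, b2)" by (cases "quotient_of q") auto
  have p: "p = of_int a1 / of_int b1" and q: "q = of_int a2 / of_int b2"
    using q1 q2 by (simp_all add: quotient_of_div)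
  have b1: "b1 > 0" and b2: "b2 > 0" using q1 q2 quotient_of_denom_pos by blast+
  define u0 where "u0 = a1 * b2"
  define v0 where "v0 = a2 * b1"
  have pu: "of_int u0 = p * of_int b1 * of_int b2" using b1 by (simp add: u0_def p)
  have qv: "of_int v0 = q * of_int b1 * of_int b2" using b2 by (simp add: v0_def q)
  have "of_int ((A * u0 + B * v0) * v0) = (of_int ((C * u0 + D * v0) * u0) :: rat)"
  proof -
    have "of_int ((A * u0 + B * v0) * v0) = ((of_int A * p + of_int B * q) * q) * (of_int b1 * of_int b2)^2"
      by (simp add: pu qv power2_eq_square algebra_simps)
    also have "\<dots> = ((of_int C * p + of_int D * q) * p) * (of_int b1 * of_int b2)^2" using eq by simp
    also have "\<dots> = of_int ((C * u0 + D * v0) * u0)"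
      by (simp add: pu qv power2_eq_square algebra_simps)
    finally show ?thesis .
  qed
  then have e0: "(A * u0 + B * v0) * v0 = (C * u0 + D * v0) * u0" by linarith
  have nz0: "u0 \<noteq> 0 \<or> v0 \<noteq> 0"
  proof (rule ccontr)
    assume "\<not> (u0 \<noteq> 0 \<or> v0 \<noteq> 0)"
    then have "p = 0" "q = 0" using pu qv b1 b2 by auto
    then show False using nz by simp
  qed
  define g0 where "g0 = gcd u0 v0"
  define u where "u = u0 div g0"
  define v where "v = v0 div g0"
  have cop: "coprime u v" unfolding u_def v_def g0_def using div_gcd_coprime nz0 by blast
  have u0e: "u0 = g0 * u" unfolding u_def g0_def by simp
  have v0e: "v0 = g0 * v" unfolding v_def g0_def by simp
  have g0nz: "g0 \<noteq> 0" unfolding g0_def using nz0 by simp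
  have "g0 * g0 * ((A * u + B * v) * v) = g0 * g0 * ((C * u + D * v) * u)"
    using e0 unfolding u0e v0e by (simp add: algebra_simps)
  then have "(A * u + B * v) * v = (C * u + D * v) * u" using g0nz by simp
  then show ?thesis using cop by blast
qed

lemma fix_M:
  assumes "fixes_pt (mat2 m b 0 m) x y" "b \<noteq> 0"
  shows "y = 0"
proof -
  have "of_int b * y * y = 0" using assms(1) by (simp add: fixes_pt_def algebra_simps)
  then show ?thesis using assms(2) by simp
qed

lemma fix_alpha:
  assumes "fixes_pt (mat2 m b 0 m) x y" "b \<noteq> 0"
  shows "fixes_pt (mat2 e k 0 f) x y"
  using assms fix_M[OF assms] by (simp add: fixes_pt_def)

lemma part2:
  assumes npos: "n > 0" and gM: "g \<in> Mset (int n ^ 2)" and par: "parabolic g"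
  shows "\<exists>a::nat. 1 \<le> a \<and> a \<le> n \<and> coprime a n \<and> parab_equiv g (mat2 (int n) (int a) 0 (int n))"
proof -
  obtain A B C D where gd: "g = mat2 A B C D" using mat2_eta by blast
  have detg: "A * D - B * C = int n ^ 2" using gM gd by (simp add: Mset_def mat2_det)
  have gcdg: "gcd (gcd A B) (gcd C D) = 1" using gM gd by (simp add: Mset_def)
  obtain p q :: rat where fp: "fixes_pt g (of_rat p) (of_rat q)"
    and all: "\<And>x y. fixes_pt g x y \<Longrightarrow> x * of_rat q = y * of_rat p"
    using par unfolding parabolic_def by blast
  have pq: "(p,q) \<noteq> (0,0)" using fp by (auto simp: fixes_pt_def)
  have "(of_rat ((of_int A * p + of_int B * q) * q) :: complex) = of_rat ((of_int C * p + of_int D * q) * p)"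
    using fp by (simp add: fixes_pt_def gd of_rat_mult of_rat_add)
  then have "(of_int A * p + of_int B * q) * q = (of_int C * p + of_int D * q) * p"
    using of_rat_eq_iff by blast
  then obtain u v :: int where cuv: "coprime u v" and fuv: "(A * u + B * v) * v = (C * u + D * v) * u"
    using rat_to_int[OF pq] by blast
  obtain s0 r0 where bz: "s0 * u + r0 * v = gcd u v" using bezout_int by blast
  define s where "s = s0"
  define r where "r = - r0"
  have det1: "u * s - r * v = 1" using bz cuv unfolding s_def r_def
    by (simp add: coprime_iff_gcd_eq_1 algebra_simps)
  define \<sigma> where "\<sigma> = mat2 s (-r) (-v) u"
  define \<tau> where "\<tau> = mat2 u r v s"
  define h where "h = \<sigma> ** g ** \<tau>"
  have ts: "\<tau> ** \<sigma> = mat 1"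
  proof -
    have "\<tau> ** \<sigma> = mat2 (u * s - r * v) 0 0 (u * s - r * v)"
      by (simp add: \<tau>_def \<sigma>_def mat2_mult algebra_simps)
    then show ?thesis using det1 mat2_one by simp
  qed
  have hs: "h ** \<sigma> = \<sigma> ** g"
  proof -
    have "h ** \<sigma> = (\<sigma> ** g) ** (\<tau> ** \<sigma>)" by (simp add: h_def matrix_mul_assoc)
    then show ?thesis by (simp add: ts matrix_mul_rid)
  qed
  have th: "\<tau> ** h = g ** \<tau>"
  proof -
    have "\<tau> ** h = (\<tau> ** \<sigma>) ** (g ** \<tau>)" by (simp add: h_def matrix_mul_assoc)
    then show ?thesis by (simp add: ts matrix_mul_lid)
  qed
  have gth: "g = \<tau> ** h ** \<sigma>"
  proof -
    have "\<tau> ** h ** \<sigma> = g ** (\<tau> ** \<sigma>)" by (simp add: th matrix_mul_assoc)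
    then show ?thesis by (simp add: ts matrix_mul_rid)
  qed
  define L where "L = h$1$1"
  define M where "M = h$1$2"
  define N where "N = h$2$2"
  have h21: "h$2$1 = 0"
    using fuv by (simp add: h_def \<sigma>_def \<tau>_def gd mat2_mult algebra_simps)
  have hd: "h = mat2 L M 0 N" using mat2_eta[of h] h21 by (simp add: L_def M_def N_def)
  have deth: "L * N = int n ^ 2"
  proof -
    have "det h = det \<sigma> * det g * det \<tau>" by (simp add: h_def det_mul)
    also have "\<dots> = int n ^ 2" using det1 detg
      by (simp add: \<sigma>_def \<tau>_def gd mat2_det algebra_simps)
    finally show ?thesis by (simp add: hd mat2_det)
  qed
  have G: "A * u + B * v = u * L" "A * r + B * s = u * M + r * N"
     "C * u + D * v = v * L" "C * r + D * s = v * M + s * N"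
    using th by (simp_all add: \<tau>_def gd hd mat2_mult mat2_eq_iff algebra_simps)
  have LN: "L = N"
  proof (rule ccontr)
    assume ne: "L \<noteq> N"
    define x where "x = u * M + r * (N - L)"
    define y where "y = v * M + s * (N - L)"
    have gx: "A * x + B * y = N * x"
    proof -
      have "A * x + B * y = M * (A * u + B * v) + (N - L) * (A * r + B * s)"
        by (simp add: x_def y_def algebra_simps)
      also have "\<dots> = N * x" unfolding G x_def by (simp add: algebra_simps)
      finally show ?thesis .
    qed
    have gy: "C * x + D * y = N * y"
    proof -
      have "C * x + D * y = M * (C * u + D * v) + (N - L) * (C * r + D * s)"
        by (simp add: x_def y_def algebra_simps)
      also have "\<dots> = N * y" unfolding G y_def by (simp add: algebra_simps)
      finally show ?thesis .
    qed
    have xv: "x * v - y * u = L - N"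
    proof -
      have "x * v - y * u = (N - L) * (r * v - u * s)" by (simp add: x_def y_def algebra_simps)
      then show ?thesis using det1 by (simp add: algebra_simps)
    qed
    have fxy: "fixes_pt g (of_int x) (of_int y)"
    proof -
      have "(x, y) \<noteq> (0, 0)" using xv ne by auto
      moreover have "(A * x + B * y) * y = (C * x + D * y) * x" using gx gy by simp
      then have "(of_int ((A * x + B * y) * y) :: complex) = of_int ((C * x + D * y) * x)" by simp
      ultimately show ?thesis by (simp add: fixes_pt_def gd)
    qed
    have fuv': "fixes_pt g (of_int u) (of_int v)"
    proof -
      have "(u, v) \<noteq> (0, 0)" using cuv by auto
      moreover have "(of_int ((A * u + B * v) * v) :: complex) = of_int ((C * u + D * v) * u)"
        using fuv by simp
      ultimately show ?thesis by (simp add: fixes_pt_def gd)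
    qed
    define P :: complex where "P = of_rat p"
    define Q :: complex where "Q = of_rat q"
    have PQ: "P \<noteq> 0 \<or> Q \<noteq> 0" using pq by (auto simp: P_def Q_def)
    have e1: "of_int x * Q = of_int y * P" using all[OF fxy] by (simp add: P_def Q_def)
    have e2: "of_int u * Q = of_int v * P" using all[OF fuv'] by (simp add: P_def Q_def)
    have z1: "(of_int x * of_int v - of_int y * of_int u) * Q = 0"
    proof -
      have "(of_int x * of_int v - of_int y * of_int u) * Q = (of_int x * Q) * of_int v - of_int y * (of_int u * Q)"
        by (simp add: algebra_simps)
      also have "\<dots> = 0" unfolding e1 e2 by (simp add: algebra_simps)
      finally show ?thesis .
    qed
    have z2: "(of_int x * of_int v - of_int y * of_int u) * P = 0"
    proof -
      have "(of_int x * of_int v - of_int y * of_int u) * P = of_int x * (of_int v * P) - (of_int y * P) * of_int u"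
        by (simp add: algebra_simps)
      also have "\<dots> = 0" unfolding e1[symmetric] e2[symmetric] by (simp add: algebra_simps)
      finally show ?thesis .
    qed
    have "(of_int x * of_int v - of_int y * of_int u :: complex) = 0" using z1 z2 PQ by auto
    then have "(of_int (x * v - y * u) :: complex) = 0" by simp
    then have "x * v - y * u = 0" by (simp only: of_int_eq_0_iff)
    then show False using xv ne by simp
  qed
  have "(L - int n) * (L + int n) = 0" using deth LN by (simp add: power2_eq_square algebra_simps)
  then have Lpm: "L = int n \<or> L = - int n" by auto
  have copM: "coprime M (int n)"
  proof (rule coprimeI)
    fix d assume dM: "d dvd M" and dn: "d dvd int n"
    have dL: "d dvd L" using Lpm dn by auto
    obtain l where l: "L = d * l" using dL by blast
    obtain m where m: "M = d * m" using dM by blast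
    have "g = mat2 (d * (u * l * s - (u * m + r * l) * v)) (d * (- u * l * r + (u * m + r * l) * u))
               (d * (v * l * s - (v * m + s * l) * v)) (d * (- v * l * r + (v * m + s * l) * u))"
      unfolding gth hd LN[symmetric] \<tau>_def \<sigma>_def l m by (simp add: mat2_mult algebra_simps)
    then have "d dvd A" "d dvd B" "d dvd C" "d dvd D" unfolding gd mat2_eq_iff by auto
    then have "d dvd gcd (gcd A B) (gcd C D)" by simp
    then show "is_unit d" using gcdg by simp
  qed
  have NL: "N = L" using LN by simp
  have key: "\<exists>t b0. 1 \<le> b0 \<and> b0 \<le> int n \<and> coprime b0 (int n) \<and>
     (\<exists>e. mat2 e t 0 e \<in> SL2Z \<and> h = mat2 e t 0 e ** mat2 (int n) b0 0 (int n))"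
  proof -
    define c where "c = (if L = int n then M else - M)"
    have copc: "coprime c (int n)" using copM by (simp add: c_def)
    define b0 where "b0 = (c - 1) mod int n + 1"
    define t where "t = (c - 1) div int n"
    have cb: "c = b0 + int n * t" unfolding b0_def t_def by simp
    have m1: "(c - 1) mod int n < int n" "0 \<le> (c - 1) mod int n" using npos by simp_all
    have b0r: "1 \<le> b0" "b0 \<le> int n" unfolding b0_def using m1 by linarith+
    have copb: "coprime b0 (int n)"
    proof (rule coprimeI)
      fix d assume "d dvd b0" "d dvd int n"
      then have "d dvd c" unfolding cb by simp
      then show "is_unit d" using copc \<open>d dvd int n\<close> coprime_common_divisor by blast
    qed
    show ?thesis
    proof (cases "L = int n")
      case True
      have "h = mat2 1 t 0 1 ** mat2 (int n) b0 0 (int n)"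
        using True cb unfolding hd NL c_def by (simp add: mat2_mult algebra_simps)
      moreover have "mat2 1 t 0 1 \<in> SL2Z" by (simp add: SL2Z_def mat2_det)
      ultimately show ?thesis using b0r copb by blast
    next
      case False
      then have Ln: "L = - int n" using Lpm by simp
      have Meq: "M = - b0 - t * int n" using False cb unfolding c_def by (simp add: algebra_simps)
      have "h = mat2 (-1) (-t) 0 (-1) ** mat2 (int n) b0 0 (int n)"
        unfolding hd NL Ln Meq mat2_mult by (simp add: mat2_eq_iff algebra_simps)
      moreover have "mat2 (-1) (-t) 0 (-1) \<in> SL2Z" by (simp add: SL2Z_def mat2_det)
      ultimately show ?thesis using b0r copb by blast
    qed
  qed
  then obtain t b0 e where b0r: "1 \<le> b0" "b0 \<le> int n" and copb: "coprime b0 (int n)"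
    and eS: "mat2 e t 0 e \<in> SL2Z" and hf: "h = mat2 e t 0 e ** mat2 (int n) b0 0 (int n)" by blast
  define b where "b = nat b0"
  have bb: "int b = b0" using b0r by (simp add: b_def)
  have sS: "\<sigma> \<in> SL2Z" using det1 by (simp add: SL2Z_def \<sigma>_def mat2_det algebra_simps)
  have "parab_equiv g (mat2 (int n) (int b) 0 (int n))"
    unfolding parab_equiv_def
  proof (intro exI conjI allI impI)
    show "\<sigma> \<in> SL2Z" by (rule sS)
    show "mat2 e t 0 e \<in> SL2Z" by (rule eS)
    fix x y assume "fixes_pt (mat2 (int n) (int b) 0 (int n)) x y"
    then show "fixes_pt (mat2 e t 0 e) x y" using fix_alpha bb b0r by fastforce
  next
    show "\<sigma> ** g = mat2 e t 0 e ** mat2 (int n) (int b) 0 (int n) ** \<sigma>"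
      using hs hf bb by simp
  qed
  moreover have "1 \<le> b" "b \<le> n" using b0r bb by auto
  moreover have "coprime b n" using copb bb by (metis coprime_int_iff)
  ultimately show ?thesis by blast
qed



theorem lemma4:
  fixes n :: nat
  assumes "n > 0"
  shows "(\<forall>a::nat. 1 \<le> a \<and> a \<le> n \<and> coprime a n \<longrightarrow>
            mat2 (int n) (int a) 0 (int n) \<in> Mset (int n ^ 2) \<and>
            parabolic (mat2 (int n) (int a) 0 (int n)))
       \<and> (\<forall>g \<in> Mset (int n ^ 2). parabolic g \<longrightarrow>
            (\<exists>a::nat. 1 \<le> a \<and> a \<le> n \<and> coprime a n \<and>
                parab_equiv g (mat2 (int n) (int a) 0 (int n))))
       \<and> (\<forall>a b::nat. 1 \<le> a \<and> a \<le> n \<and> coprime a n \<and> 1 \<le> b \<and> b \<le> n \<and> coprime b n \<and>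
            parab_equiv (mat2 (int n) (int a) 0 (int n)) (mat2 (int n) (int b) 0 (int n))
            \<longrightarrow> a = b)"
    using part1[OF assms] part2[OF assms] part3[OF assms] by blast

end
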